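(* Fix $n\ge1$ and an integer $q$ with $1\le q\le n$. Let $S=S_{u,b}$ where $(u,b)$ is drawn uniformly from $(\{0,1\}^n\setminus\{0^n\})\times\{0,1\}$. Any classical (possibly randomized) algorithm that is given $q$ samples drawn uniformly from $S$ and outputs some $y\in\{0,1\}^n$ satisfies \[ \Pr[y\in\bar S]\le \frac12+\frac{1}{2\left(2^{\,n-q+1}-1\right)}, \] where the probability is over the choice of $S$, the samples and the internal randomness of the algorithm. In particular, for every such algorithm there is some $S\in\mathcal{F}_{\mathrm{BV}}$ on which its success probability is at most this bound.
   Context: For $u\in\{0,1\}^n\setminus\{0^n\}$ and $b\in\{0,1\}$, $S_{u,b}=\{x\in\{0,1\}^n : u\cdot x\equiv b\pmod 2\}$, $\mathcal{F}_{\mathrm{BV}}$ is the family of all such sets, and $\bar S=\{0,1\}^n\setminus S$. Success means outputting an element of the complement $\bar S$. *)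

theory Defs
  imports "HOL-Probability.Probability"
begin

text \<open>The Boolean cube {0,1}^n, as bool lists of length n (True = 1).\<close>
definition cube :: "nat \<Rightarrow> bool list set" where
  "cube n = {x. length x = n}"

definition dotp :: "bool list \<Rightarrow> bool list \<Rightarrow> bool" where
  "dotp u x = odd (length (filter id (map2 (\<and>) u x)))"

definition BV_set :: "nat \<Rightarrow> bool list \<Rightarrow> bool \<Rightarrow> bool list set" where
  "BV_set n u b = {x \<in> cube n. dotp u x = b}"

text \<open>Success probability of a randomized algorithm A (samples \<Rightarrow> distribution of outputs)
  on a fixed set S_{u,b}: q i.i.d. uniform samples from S, then output y; success iff y in the
  complement of S.\<close>
definition success_on :: "nat \<Rightarrow> nat \<Rightarrow> (bool list list \<Rightarrow> bool list pmf) \<Rightarrow> bool list \<Rightarrow> bool \<Rightarrow> real" where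
  "success_on n q A u b =
     measure_pmf.prob
       (bind_pmf (replicate_pmf q (pmf_of_set (BV_set n u b))) A)
       (cube n - BV_set n u b)"

definition success :: "nat \<Rightarrow> nat \<Rightarrow> (bool list list \<Rightarrow> bool list pmf) \<Rightarrow> real" where
  "success n q A =
     measure_pmf.prob
       (bind_pmf (pmf_of_set ((cube n - {replicate n False}) \<times> (UNIV :: bool set)))
          (\<lambda>(u, b). bind_pmf (replicate_pmf q (pmf_of_set (BV_set n u b)))
             (\<lambda>xs. map_pmf (\<lambda>y. y \<in> cube n - BV_set n u b) (A xs))))
       {True}"

end

theory Submission
  imports Defs
begin

definition xorl :: "bool list \<Rightarrow> bool list \<Rightarrow> bool list" where
  "xorl u v = map2 (\<noteq>) u v"

lemma dotp_Nil1[simp]: "dotp [] x = False" by (simp add: dotp_def)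
lemma dotp_Nil2[simp]: "dotp u [] = False" by (simp add: dotp_def)
lemma dotp_Cons[simp]: "dotp (a#u) (c#x) = ((a \<and> c) \<noteq> dotp u x)"
  by (auto simp add: dotp_def)

lemma xorl_Cons[simp]: "xorl (a#u) (c#v) = (a \<noteq> c) # xorl u v" by (simp add: xorl_def)
lemma xorl_Nil[simp]: "xorl [] v = []" by (simp add: xorl_def)
lemma length_xorl[simp]: "length (xorl u v) = min (length u) (length v)" by (simp add: xorl_def)

lemma dotp_xor1: "length u = length v \<Longrightarrow> length v = length x \<Longrightarrow>
   dotp (xorl u v) x = (dotp u x \<noteq> dotp v x)"
  by (induction u v x rule: list_induct3) auto

lemma dotp_xor2: "length u = length v \<Longrightarrow> length v = length x \<Longrightarrow>
   dotp x (xorl u v) = (dotp x u \<noteq> dotp x v)"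
  by (induction u v x rule: list_induct3) auto

lemma xorl_inj: "length a = length b \<Longrightarrow> length b = length c \<Longrightarrow> xorl a c = xorl b c \<Longrightarrow> a = b"
  by (induction a b c rule: list_induct3) auto

lemma dotp_rep: "dotp u (replicate m False) = False"
proof (induction u arbitrary: m)
  case (Cons a u) then show ?case by (cases m) auto
qed simp

lemma dotp_rep1: "dotp (replicate m False) u = False"
proof (induction m arbitrary: u)
  case (Suc m) then show ?case by (cases u) auto
qed simp

lemma dotp_unit: "i < length u \<Longrightarrow> dotp u ((replicate (length u) False)[i:=True]) = u!i"
proof (induction u arbitrary: i)
  case Nil then show ?case by simp
next
  case (Cons a u)
  then show ?case by (cases i) (auto simp: dotp_rep)
qed

lemma half_gen:
  fixes f :: "'a \<Rightarrow> 'a \<Rightarrow> 'a"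
  assumes fin: "finite C"
    and cl: "\<And>a b. a \<in> C \<Longrightarrow> b \<in> C \<Longrightarrow> f a b \<in> C"
    and inj: "\<And>a b c. a \<in> C \<Longrightarrow> b \<in> C \<Longrightarrow> c \<in> C \<Longrightarrow> f a c = f b c \<Longrightarrow> a = b"
    and lin: "\<And>a b. a \<in> C \<Longrightarrow> b \<in> C \<Longrightarrow> h (f a b) = (h a \<noteq> h b)"
    and p0: "p0 \<in> C" "h p0"
  shows "card {x\<in>C. h x} = card {x\<in>C. \<not> h x}"
proof -
  have i: "inj_on (\<lambda>x. f x p0) D" if "D \<subseteq> C" for D
    using that inj p0 unfolding inj_on_def by blast
  have s1: "(\<lambda>x. f x p0) ` {x\<in>C. h x} \<subseteq> {x\<in>C. \<not> h x}"
  proof (rule image_subsetI)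
    fix x assume "x \<in> {x\<in>C. h x}"
    then show "f x p0 \<in> {x\<in>C. \<not> h x}" using cl[of x p0] lin[of x p0] p0 by simp
  qed
  have s2: "(\<lambda>x. f x p0) ` {x\<in>C. \<not> h x} \<subseteq> {x\<in>C. h x}"
  proof (rule image_subsetI)
    fix x assume "x \<in> {x\<in>C. \<not> h x}"
    then show "f x p0 \<in> {x\<in>C. h x}" using cl[of x p0] lin[of x p0] p0 by simp
  qed
  have "card {x\<in>C. h x} \<le> card {x\<in>C. \<not> h x}"
    by (rule card_inj_on_le[OF i s1]) (use fin in simp_all)
  moreover have "card {x\<in>C. \<not> h x} \<le> card {x\<in>C. h x}"
    by (rule card_inj_on_le[OF i s2]) (use fin in simp_all)
  ultimately show ?thesis by simp
qed

lemma half_le: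
  fixes f :: "'a \<Rightarrow> 'a \<Rightarrow> 'a"
  assumes fin: "finite C"
    and cl: "\<And>a b. a \<in> C \<Longrightarrow> b \<in> C \<Longrightarrow> f a b \<in> C"
    and inj: "\<And>a b c. a \<in> C \<Longrightarrow> b \<in> C \<Longrightarrow> c \<in> C \<Longrightarrow> f a c = f b c \<Longrightarrow> a = b"
    and lin: "\<And>a b. a \<in> C \<Longrightarrow> b \<in> C \<Longrightarrow> h (f a b) = (h a \<noteq> h b)"
  shows "card {x\<in>C. h x} \<le> card {x\<in>C. \<not> h x}"
proof (cases "\<exists>p0\<in>C. h p0")
  case True
  then obtain p0 where "p0 \<in> C" "h p0" by blast
  from half_gen[OF assms this] show ?thesis by simp
next
  case False
  then have "{x\<in>C. h x} = {}" by auto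
  then show ?thesis by (simp only:) simp
qed

lemma card_split: "finite C \<Longrightarrow> card C = card {x\<in>C. P x} + card {x\<in>C. \<not> P x}"
proof -
  assume f: "finite C"
  have "C = {x\<in>C. P x} \<union> {x\<in>C. \<not> P x}" by blast
  then have "card C = card ({x\<in>C. P x} \<union> {x\<in>C. \<not> P x})" by simp
  also have "\<dots> = card {x\<in>C. P x} + card {x\<in>C. \<not> P x}"
    by (rule card_Un_disjoint) (use f in auto)
  finally show ?thesis .
qed

lemma cube_eq: "cube n = {xs. set xs \<subseteq> UNIV \<and> length xs = n}" by (auto simp: cube_def)
lemma finite_cube[simp]: "finite (cube n)"
  unfolding cube_eq by (rule finite_lists_length_eq) simp
lemma card_cube: "card (cube n) = 2 ^ n"
  unfolding cube_eq by (subst card_lists_length_eq) auto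

lemma card_BV:
  assumes u: "u \<in> cube n" "u \<noteq> replicate n False"
  shows "card (BV_set n u b) = 2 ^ (n - 1)"
proof -
  have lu: "length u = n" using u(1) by (simp add: cube_def)
  have "\<exists>i. i < n \<and> u ! i"
  proof (rule ccontr)
    assume "\<not> (\<exists>i. i < n \<and> u ! i)"
    then have "u = replicate n False" using lu by (simp add: list_eq_iff_nth_eq)
    then show False using u(2) by simp
  qed
  then obtain i where i: "i < n" "u ! i" by blast
  define e where "e = (replicate n False)[i:=True]"
  have e1: "e \<in> cube n" by (simp add: e_def cube_def)
  have "dotp u e = u ! i" unfolding e_def using dotp_unit[of i u] i lu by simp
  then have e2: "dotp u e" using i by simp
  have eq: "card {x\<in>cube n. dotp u x} = card {x\<in>cube n. \<not> dotp u x}"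
  proof (rule half_gen[where f=xorl and C="cube n" and h="dotp u" and ?p0.0=e, OF finite_cube _ _ _ e1 e2])
    fix a b assume "a \<in> cube n" "b \<in> cube n"
    then show "xorl a b \<in> cube n" by (simp add: cube_def)
  next
    fix a b c assume "a \<in> cube n" "b \<in> cube n" "c \<in> cube n" "xorl a c = xorl b c"
    then show "a = b" by (intro xorl_inj[of a b c]) (simp_all add: cube_def)
  next
    fix a b assume "a \<in> cube n" "b \<in> cube n"
    then show "dotp u (xorl a b) = (dotp u a \<noteq> dotp u b)" using lu by (intro dotp_xor2) (simp_all add: cube_def)
  qed
  have "card (cube n) = card {x\<in>cube n. dotp u x} + card {x\<in>cube n. \<not> dotp u x}"
    by (rule card_split) simp
  then have c2: "2 * card {x\<in>cube n. dotp u x} = 2 ^ n" using eq card_cube by simp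
  have p2: "(2::nat) ^ n = 2 * 2 ^ (n - 1)" using i by (cases n) simp_all
  have c1: "card {x\<in>cube n. dotp u x} = 2 ^ (n - 1)" using c2 p2 by linarith
  have c0: "card {x\<in>cube n. \<not> dotp u x} = 2 ^ (n - 1)" using c1 eq by simp
  have "BV_set n u b = {x\<in>cube n. dotp u x = b}" by (simp add: BV_set_def)
  then show ?thesis using c1 c0 by (cases b) simp_all
qed


definition padd :: "bool list \<times> bool \<Rightarrow> bool list \<times> bool \<Rightarrow> bool list \<times> bool" where
  "padd p p' = (xorl (fst p) (fst p'), snd p \<noteq> snd p')"

definition Sol :: "nat \<Rightarrow> bool list list \<Rightarrow> (bool list \<times> bool) set" where
  "Sol n xs = {p. fst p \<in> cube n \<and> (\<forall>x\<in>set xs. dotp (fst p) x = snd p)}"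

definition hh :: "bool list \<Rightarrow> bool list \<times> bool \<Rightarrow> bool" where
  "hh y p = (dotp (fst p) y \<noteq> snd p)"

lemma Sol_sub: "Sol n xs \<subseteq> cube n \<times> UNIV" by (auto simp: Sol_def)
lemma finite_Sol[simp]: "finite (Sol n xs)"
  by (rule finite_subset[OF Sol_sub]) auto

lemma hh_lin: "y \<in> cube n \<Longrightarrow> fst a \<in> cube n \<Longrightarrow> fst b \<in> cube n \<Longrightarrow>
   hh y (padd a b) = (hh y a \<noteq> hh y b)"
proof -
  assume "y \<in> cube n" "fst a \<in> cube n" "fst b \<in> cube n"
  then have "dotp (xorl (fst a) (fst b)) y = (dotp (fst a) y \<noteq> dotp (fst b) y)"
    by (intro dotp_xor1) (simp_all add: cube_def)
  then show ?thesis by (simp add: hh_def padd_def) blast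
qed

lemma Sol_closed: "set xs \<subseteq> cube n \<Longrightarrow> a \<in> Sol n xs \<Longrightarrow> b \<in> Sol n xs \<Longrightarrow> padd a b \<in> Sol n xs"
proof -
  assume xs: "set xs \<subseteq> cube n" and a: "a \<in> Sol n xs" and b: "b \<in> Sol n xs"
  have la: "length (fst a) = n" and lb: "length (fst b) = n" using a b by (simp_all add: Sol_def cube_def)
  have "\<forall>x\<in>set xs. dotp (xorl (fst a) (fst b)) x = (snd a \<noteq> snd b)"
  proof
    fix x assume x: "x \<in> set xs"
    then have "length x = n" using xs by (auto simp: cube_def)
    then have "dotp (xorl (fst a) (fst b)) x = (dotp (fst a) x \<noteq> dotp (fst b) x)"
      using la lb by (intro dotp_xor1) simp_all
    also have "\<dots> = (snd a \<noteq> snd b)" using a b x by (simp add: Sol_def)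
    finally show "dotp (xorl (fst a) (fst b)) x = (snd a \<noteq> snd b)" .
  qed
  then show ?thesis using la lb by (simp add: Sol_def padd_def cube_def)
qed

lemma padd_inj: "a \<in> Sol n xs \<Longrightarrow> b \<in> Sol n xs \<Longrightarrow> c \<in> Sol n xs \<Longrightarrow> padd a c = padd b c \<Longrightarrow> a = b"
proof -
  assume a: "a \<in> Sol n xs" and b: "b \<in> Sol n xs" and c: "c \<in> Sol n xs" and eq: "padd a c = padd b c"
  from eq have e1: "xorl (fst a) (fst c) = xorl (fst b) (fst c)" and e2: "(snd a \<noteq> snd c) = (snd b \<noteq> snd c)"
    by (simp_all add: padd_def)
  have "fst a = fst b" using a b c e1 by (intro xorl_inj[OF _ _ e1]) (simp_all add: Sol_def cube_def)
  moreover have "snd a = snd b" using e2 by blast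
  ultimately show ?thesis by (rule prod_eqI)
qed

lemma Sol_half:
  assumes "set xs \<subseteq> cube n" "y \<in> cube n"
  shows "card {p\<in>Sol n xs. hh y p} \<le> card {p\<in>Sol n xs. \<not> hh y p}"
proof (rule half_le[where f=padd])
  show "finite (Sol n xs)" by simp
next
  fix a b assume "a \<in> Sol n xs" "b \<in> Sol n xs"
  then show "padd a b \<in> Sol n xs" by (rule Sol_closed[OF assms(1)])
next
  fix a b c assume "a \<in> Sol n xs" "b \<in> Sol n xs" "c \<in> Sol n xs" "padd a c = padd b c"
  then show "a = b" by (rule padd_inj)
next
  fix a b assume a: "a \<in> Sol n xs" and b: "b \<in> Sol n xs"
  have "fst a \<in> cube n" "fst b \<in> cube n" using a b by (auto simp: Sol_def)
  then show "hh y (padd a b) = (hh y a \<noteq> hh y b)" by (rule hh_lin[OF assms(2)])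
qed

lemma Sol_Cons: "Sol n (x#xs) = {p\<in>Sol n xs. \<not> hh x p}"
  by (auto simp: Sol_def hh_def)

lemma card_Sol_Nil: "card (Sol n []) = 2 ^ (n+1)"
proof -
  have "Sol n [] = cube n \<times> UNIV" by (auto simp: Sol_def)
  then show ?thesis by (simp add: card_cartesian_product card_cube)
qed

lemma Sol_lower: "set xs \<subseteq> cube n \<Longrightarrow> 2 ^ (n+1) \<le> card (Sol n xs) * 2 ^ length xs"
proof (induction xs)
  case Nil then show ?case by (simp add: card_Sol_Nil)
next
  case (Cons x xs)
  have x: "x \<in> cube n" and xs: "set xs \<subseteq> cube n" using Cons.prems by auto
  have split: "card (Sol n xs) = card {p\<in>Sol n xs. hh x p} + card {p\<in>Sol n xs. \<not> hh x p}"
    by (rule card_split) simp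
  have "card {p\<in>Sol n xs. hh x p} \<le> card {p\<in>Sol n xs. \<not> hh x p}"
    by (rule Sol_half[OF xs x])
  then have "card (Sol n xs) \<le> 2 * card (Sol n (x#xs))" using split Sol_Cons by simp
  then have "card (Sol n xs) * 2 ^ length xs \<le> card (Sol n (x#xs)) * 2 ^ length (x#xs)"
    by simp
  then show ?case using Cons.IH[OF xs] by linarith
qed

definition Pset :: "nat \<Rightarrow> (bool list \<times> bool) set" where
  "Pset n = (cube n - {replicate n False}) \<times> UNIV"

lemma inBV: "set xs \<subseteq> cube n \<Longrightarrow> (set xs \<subseteq> BV_set n u b) = (\<forall>x\<in>set xs. dotp u x = b)"
  by (auto simp: BV_set_def)

lemma count_bound:
  assumes xs: "set xs \<subseteq> cube n" "length xs = q" and q: "1 \<le> q" "q \<le> n" and y: "y \<in> cube n"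
  shows "real (card {p\<in>Pset n. set xs \<subseteq> BV_set n (fst p) (snd p) \<and> y \<in> cube n - BV_set n (fst p) (snd p)})
     \<le> (1/2 + 1 / (2 * (2 ^ (n - q + 1) - 1))) * real (card {p\<in>Pset n. set xs \<subseteq> BV_set n (fst p) (snd p)})"
proof -
  define z where "z = (replicate n False, False)"
  have z: "z \<in> Sol n xs" by (auto simp: z_def Sol_def cube_def dotp_rep1)
  obtain x0 where x0: "x0 \<in> set xs" using xs q by (cases xs) auto
  have e1: "{p\<in>Pset n. set xs \<subseteq> BV_set n (fst p) (snd p)} = Sol n xs - {z}"
  proof (rule set_eqI)
    fix p :: "bool list \<times> bool"
    obtain u b where p: "p = (u, b)" by (cases p)
    show "p \<in> {p\<in>Pset n. set xs \<subseteq> BV_set n (fst p) (snd p)} \<longleftrightarrow> p \<in> Sol n xs - {z}"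
      using x0 unfolding p inBV[OF xs(1)] by (auto simp: Pset_def Sol_def z_def dotp_rep1)
  qed
  have e2: "{p\<in>Pset n. set xs \<subseteq> BV_set n (fst p) (snd p) \<and> y \<in> cube n - BV_set n (fst p) (snd p)}
      = {p\<in>Sol n xs. hh y p}"
  proof (rule set_eqI)
    fix p :: "bool list \<times> bool"
    obtain u b where p: "p = (u, b)" by (cases p)
    show "p \<in> {p\<in>Pset n. set xs \<subseteq> BV_set n (fst p) (snd p) \<and> y \<in> cube n - BV_set n (fst p) (snd p)}
         \<longleftrightarrow> p \<in> {p\<in>Sol n xs. hh y p}"
      using x0 y unfolding p inBV[OF xs(1)]
      by (auto simp: Pset_def Sol_def hh_def BV_set_def dotp_rep1)
  qed
  define c where "c = card (Sol n xs)"
  define c1 where "c1 = card {p\<in>Sol n xs. hh y p}"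
  have split: "c = c1 + card {p\<in>Sol n xs. \<not> hh y p}" unfolding c_def c1_def
    by (rule card_split) simp
  have "c1 \<le> card {p\<in>Sol n xs. \<not> hh y p}" unfolding c1_def by (rule Sol_half[OF xs(1) y])
  then have h1: "2 * real c1 \<le> real c" using split by simp
  define M :: nat where "M = 2 ^ (n - q + 1)"
  have "2 ^ (n+1) = M * 2 ^ q" using q unfolding M_def by (simp add: power_add[symmetric])
  then have "M * 2 ^ q \<le> c * 2 ^ q" using Sol_lower[OF xs(1)] xs(2) c_def by simp
  then have cM: "M \<le> c" by simp
  have M2: "2 \<le> M" unfolding M_def using q by simp
  have card1: "card (Sol n xs - {z}) = c - 1" unfolding c_def using z by simp
  have c1pos: "1 \<le> c" using cM M2 by simp
  have Mr: "(2::real) ^ (n - q + 1) = real M" unfolding M_def by simp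
  have key: "1 \<le> (real c - 1) / (real M - 1)" using cM M2 by (simp add: field_simps)
  have "real c1 \<le> real c / 2" using h1 by simp
  also have "\<dots> = (real c - 1) / 2 + 1 / 2" by (simp add: diff_divide_distrib)
  also have "\<dots> \<le> (real c - 1) / 2 + ((real c - 1) / (real M - 1)) / 2" by (rule add_left_mono[OF divide_right_mono[OF key]]) simp
  also have "\<dots> = (1/2 + 1 / (2 * (real M - 1))) * (real c - 1)" by (simp add: field_simps)
  finally show ?thesis unfolding e1 e2 card1 Mr c1_def[symmetric] using c1pos by (simp add: of_nat_diff)
qed


lemma rep_Suc: "replicate_pmf (Suc m) p = map_pmf (\<lambda>(x, xs). x # xs) (pair_pmf p (replicate_pmf m p))"
  by (simp add: pair_pmf_def map_bind_pmf map_return_pmf)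

lemma pmf_replicate:
  "pmf (replicate_pmf m p) xs = (if length xs = m then (\<Prod>x\<leftarrow>xs. pmf p x) else 0)"
proof (induction m arbitrary: xs)
  case 0 then show ?case by (cases xs) (simp_all add: indicator_def)
next
  case (Suc m)
  have inj: "inj (\<lambda>(x::'a, xs). x # xs)" by (auto simp: inj_def)
  show ?case
  proof (cases xs)
    case Nil
    have "(\<lambda>(x::'a, xs). x # xs) -` {[]} = {}" by auto
    then show ?thesis unfolding rep_Suc pmf_map using Nil by simp
  next
    case (Cons y ys)
    have "pmf (replicate_pmf (Suc m) p) xs = pmf (map_pmf (\<lambda>(x, xs). x # xs) (pair_pmf p (replicate_pmf m p))) ((\<lambda>(x, xs). x # xs) (y, ys))"
      unfolding rep_Suc Cons by simp
    also have "\<dots> = pmf (pair_pmf p (replicate_pmf m p)) (y, ys)" by (rule pmf_map_inj'[OF inj])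
    also have "\<dots> = pmf p y * pmf (replicate_pmf m p) ys" by (rule pmf_pair)
    finally show ?thesis using Suc.IH[of ys] Cons by simp
  qed
qed

lemma prod_pmf_of_set:
  assumes "finite S" "S \<noteq> {}"
  shows "(\<Prod>x\<leftarrow>xs. pmf (pmf_of_set S) x) = (if set xs \<subseteq> S then 1 / real (card S) ^ length xs else 0)"
  by (induction xs) (use assms in \<open>auto simp: indicator_def\<close>)

lemma pmf_rep_set:
  assumes "finite S" "S \<noteq> {}"
  shows "pmf (replicate_pmf m (pmf_of_set S)) xs = (if length xs = m \<and> set xs \<subseteq> S then 1 / real (card S) ^ m else 0)"
  unfolding pmf_replicate prod_pmf_of_set[OF assms] by simp


lemma sum_if_const: "finite P \<Longrightarrow> (\<Sum>p\<in>P. if Q p then (c::real) else 0) = real (card {p\<in>P. Q p}) * c"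
  by (simp add: sum.inter_filter[symmetric])

lemma BV_sub: "BV_set n u b \<subseteq> cube n" by (auto simp: BV_set_def)

lemma finite_Pset: "finite (Pset n)" by (simp add: Pset_def)

lemma Pset_ne: "1 \<le> n \<Longrightarrow> Pset n \<noteq> {}"
proof -
  assume n: "1 \<le> n"
  have "replicate n True \<noteq> replicate n False" using n by (cases n) simp_all
  then have "(replicate n True, True) \<in> Pset n" by (simp add: Pset_def cube_def)
  then show ?thesis by blast
qed

lemma Pset_BV:
  assumes "p \<in> Pset n"
  shows "finite (BV_set n (fst p) (snd p))" "BV_set n (fst p) (snd p) \<noteq> {}"
    "card (BV_set n (fst p) (snd p)) = 2 ^ (n - 1)"
proof -
  show c: "card (BV_set n (fst p) (snd p)) = 2 ^ (n - 1)"
    using assms by (intro card_BV) (auto simp: Pset_def)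
  show "finite (BV_set n (fst p) (snd p))" by (rule finite_subset[OF BV_sub]) simp
  then show "BV_set n (fst p) (snd p) \<noteq> {}" using c by (intro notI) simp
qed

definition Xs :: "nat \<Rightarrow> nat \<Rightarrow> bool list list set" where
  "Xs n q = {xs. set xs \<subseteq> cube n \<and> length xs = q}"

lemma finite_Xs: "finite (Xs n q)"
  unfolding Xs_def by (rule finite_lists_length_eq) simp

definition Rp :: "nat \<Rightarrow> nat \<Rightarrow> bool list \<times> bool \<Rightarrow> bool list list pmf" where
  "Rp n q p = replicate_pmf q (pmf_of_set (BV_set n (fst p) (snd p)))"

lemma pmf_Rp:
  assumes "p \<in> Pset n" "xs \<in> Xs n q"
  shows "pmf (Rp n q p) xs = (if set xs \<subseteq> BV_set n (fst p) (snd p) then 1 / real (2 ^ (n - 1)) ^ q else 0)"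
  unfolding Rp_def pmf_rep_set[OF Pset_BV(1,2)[OF assms(1)]] Pset_BV(3)[OF assms(1)]
  using assms(2) by (simp add: Xs_def)

lemma set_Rp: "p \<in> Pset n \<Longrightarrow> set_pmf (Rp n q p) \<subseteq> Xs n q"
  unfolding Rp_def set_replicate_pmf using Pset_BV(1,2)[of p n] BV_sub[of n "fst p" "snd p"]
  by (auto simp: Xs_def)

lemma int_Rp:
  fixes g :: "bool list list \<Rightarrow> real"
  assumes "p \<in> Pset n"
  shows "(\<integral>xs. g xs \<partial>measure_pmf (Rp n q p)) = (\<Sum>xs\<in>Xs n q. pmf (Rp n q p) xs * g xs)"
  by (subst integral_measure_pmf[OF finite_Xs]) (use set_Rp[OF assms] in auto)

definition FF :: "nat \<Rightarrow> nat \<Rightarrow> (bool list list \<Rightarrow> bool list pmf) \<Rightarrow> bool list \<times> bool \<Rightarrow> real" where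
  "FF n q A p = (\<Sum>xs\<in>Xs n q. pmf (Rp n q p) xs * (\<Sum>y\<in>cube n - BV_set n (fst p) (snd p). pmf (A xs) y))"

lemma success_on_FF:
  assumes "p \<in> Pset n"
  shows "success_on n q A (fst p) (snd p) = FF n q A p"
proof -
  let ?T = "cube n - BV_set n (fst p) (snd p)"
  have "success_on n q A (fst p) (snd p) = measure_pmf.prob (bind_pmf (Rp n q p) A) ?T"
    by (simp add: success_on_def Rp_def)
  also have "\<dots> = (\<Sum>y\<in>?T. pmf (bind_pmf (Rp n q p) A) y)"
    by (rule measure_measure_pmf_finite) simp
  also have "\<dots> = (\<Sum>y\<in>?T. \<Sum>xs\<in>Xs n q. pmf (Rp n q p) xs * pmf (A xs) y)"
    by (simp add: pmf_bind int_Rp[OF assms])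
  also have "\<dots> = FF n q A p"
    unfolding FF_def by (subst sum.swap) (simp add: sum_distrib_left)
  finally show ?thesis .
qed

lemma success_FF:
  assumes "1 \<le> n"
  shows "success n q A = (\<Sum>p\<in>Pset n. FF n q A p) / real (card (Pset n))"
proof -
  define H where "H = (\<lambda>p. bind_pmf (Rp n q p)
       (\<lambda>xs. map_pmf (\<lambda>y. y \<in> cube n - BV_set n (fst p) (snd p)) (A xs)))"
  have "success n q A = measure_pmf.prob (bind_pmf (pmf_of_set (Pset n)) H) {True}"
  proof -
    have eqf: "(\<lambda>(u, b). bind_pmf (replicate_pmf q (pmf_of_set (BV_set n u b)))
             (\<lambda>xs. map_pmf (\<lambda>y. y \<in> cube n - BV_set n u b) (A xs))) = H"
      unfolding H_def Rp_def by (rule ext) (simp split: prod.split)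
    show ?thesis unfolding success_def eqf Pset_def ..
  qed
  also have "\<dots> = pmf (bind_pmf (pmf_of_set (Pset n)) H) True"
    by (rule measure_pmf_single)
  also have "\<dots> = (\<Sum>p\<in>Pset n. pmf (H p) True) / real (card (Pset n))"
    by (simp add: pmf_bind integral_pmf_of_set[OF Pset_ne[OF assms] finite_Pset])
  also have "\<dots> = (\<Sum>p\<in>Pset n. FF n q A p) / real (card (Pset n))"
  proof -
    have "pmf (H p) True = FF n q A p" if p: "p \<in> Pset n" for p
    proof -
      have m: "pmf (map_pmf (\<lambda>y. y \<in> cube n - BV_set n (fst p) (snd p)) (A xs)) True
           = (\<Sum>y\<in>cube n - BV_set n (fst p) (snd p). pmf (A xs) y)" for xs
      proof -
        have "(\<lambda>y. y \<in> cube n - BV_set n (fst p) (snd p)) -` {True} = cube n - BV_set n (fst p) (snd p)"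
          by auto
        then show ?thesis unfolding pmf_map by (simp add: measure_measure_pmf_finite)
      qed
      show ?thesis unfolding H_def FF_def pmf_bind int_Rp[OF p] m ..
    qed
    then show ?thesis by (simp cong: sum.cong)
  qed
  finally show ?thesis .
qed


lemma FF_sum_bound:
  fixes A :: "bool list list \<Rightarrow> bool list pmf"
  assumes n: "1 \<le> q" "q \<le> n" and Acube: "\<And>xs. set_pmf (A xs) \<subseteq> cube n"
  shows "(\<Sum>p\<in>Pset n. FF n q A p) \<le> (1/2 + 1 / (2 * (2 ^ (n - q + 1) - 1))) * real (card (Pset n))"
proof -
  define B :: real where "B = 1/2 + 1 / (2 * (2 ^ (n - q + 1) - 1))"
  define K :: real where "K = real (2 ^ (n - 1)) ^ q"
  have Kpos: "K > 0" unfolding K_def by simp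
  define S where "S = (\<lambda>p. BV_set n (fst p) (snd p))"
  define G where "G = (\<lambda>p xs y. if set xs \<subseteq> S p \<and> y \<in> cube n - S p then pmf (A xs) y / K else 0)"
  have FFG: "FF n q A p = (\<Sum>xs\<in>Xs n q. \<Sum>y\<in>cube n. G p xs y)" if p: "p \<in> Pset n" for p
    unfolding FF_def
  proof (rule sum.cong[OF refl])
    fix xs assume xs: "xs \<in> Xs n q"
    have ce: "cube n - S p = {y\<in>cube n. y \<in> cube n - S p}" by blast
    have s1: "(\<Sum>y\<in>cube n - S p. pmf (A xs) y) = (\<Sum>y\<in>cube n. if y \<in> cube n - S p then pmf (A xs) y else 0)"
      by (subst ce) (simp add: sum.inter_filter)
    show "pmf (Rp n q p) xs * (\<Sum>y\<in>cube n - BV_set n (fst p) (snd p). pmf (A xs) y) = (\<Sum>y\<in>cube n. G p xs y)"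
    proof -
      have Sp: "BV_set n (fst p) (snd p) = S p" by (simp add: S_def)
      have r: "pmf (Rp n q p) xs = (if set xs \<subseteq> S p then 1 / K else 0)"
        using pmf_Rp[OF p xs] by (simp add: S_def K_def)
      show ?thesis unfolding Sp r s1
        by (cases "set xs \<subseteq> S p") (auto simp: G_def sum_distrib_left intro!: sum.cong)
    qed
  qed
  have "(\<Sum>p\<in>Pset n. FF n q A p) = (\<Sum>p\<in>Pset n. \<Sum>xs\<in>Xs n q. \<Sum>y\<in>cube n. G p xs y)"
    using FFG by simp
  also have "\<dots> = (\<Sum>xs\<in>Xs n q. \<Sum>p\<in>Pset n. \<Sum>y\<in>cube n. G p xs y)"
    by (rule sum.swap)
  also have "\<dots> = (\<Sum>xs\<in>Xs n q. \<Sum>y\<in>cube n. \<Sum>p\<in>Pset n. G p xs y)"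
    by (rule sum.cong[OF refl]) (rule sum.swap)
  also have "\<dots> \<le> (\<Sum>xs\<in>Xs n q. \<Sum>y\<in>cube n. pmf (A xs) y / K * (B * real (card {p\<in>Pset n. set xs \<subseteq> S p})))"
  proof (intro sum_mono)
    fix xs y assume xs: "xs \<in> Xs n q" and y: "y \<in> cube n"
    have "(\<Sum>p\<in>Pset n. G p xs y) = real (card {p\<in>Pset n. set xs \<subseteq> S p \<and> y \<in> cube n - S p}) * (pmf (A xs) y / K)"
      unfolding G_def by (rule sum_if_const[OF finite_Pset])
    also have "\<dots> \<le> (B * real (card {p\<in>Pset n. set xs \<subseteq> S p})) * (pmf (A xs) y / K)"
    proof (rule mult_right_mono)
      show "real (card {p\<in>Pset n. set xs \<subseteq> S p \<and> y \<in> cube n - S p}) \<le> B * real (card {p\<in>Pset n. set xs \<subseteq> S p})"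
        unfolding B_def S_def using count_bound[of xs n q y] xs y n by (simp add: Xs_def)
      show "0 \<le> pmf (A xs) y / K" using Kpos by simp
    qed
    finally show "(\<Sum>p\<in>Pset n. G p xs y) \<le> pmf (A xs) y / K * (B * real (card {p\<in>Pset n. set xs \<subseteq> S p}))"
      by (simp add: mult.commute)
  qed
  also have "\<dots> = (\<Sum>xs\<in>Xs n q. B / K * real (card {p\<in>Pset n. set xs \<subseteq> S p}))"
  proof (rule sum.cong[OF refl])
    fix xs assume xs: "xs \<in> Xs n q"
    have "(\<Sum>y\<in>cube n. pmf (A xs) y / K * (B * real (card {p\<in>Pset n. set xs \<subseteq> S p})))
        = (\<Sum>y\<in>cube n. pmf (A xs) y) * (B / K * real (card {p\<in>Pset n. set xs \<subseteq> S p}))"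
      by (simp add: sum_distrib_right sum_divide_distrib)
    also have "\<dots> = B / K * real (card {p\<in>Pset n. set xs \<subseteq> S p})"
      using sum_pmf_eq_1[OF finite_cube Acube[of xs]] by simp
    finally show "(\<Sum>y\<in>cube n. pmf (A xs) y / K * (B * real (card {p\<in>Pset n. set xs \<subseteq> S p})))
        = B / K * real (card {p\<in>Pset n. set xs \<subseteq> S p})" .
  qed
  also have "\<dots> = B / K * (\<Sum>xs\<in>Xs n q. \<Sum>p\<in>Pset n. if set xs \<subseteq> S p then 1 else 0)"
    by (simp add: sum_distrib_left sum_if_const[OF finite_Pset])
  also have "\<dots> = B / K * (\<Sum>p\<in>Pset n. \<Sum>xs\<in>Xs n q. if set xs \<subseteq> S p then 1 else 0)"
    by (subst sum.swap) (rule refl)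
  also have "\<dots> = B / K * (\<Sum>p\<in>Pset n. K)"
  proof -
    have "(\<Sum>xs\<in>Xs n q. if set xs \<subseteq> S p then 1 else 0) = K" if p: "p \<in> Pset n" for p
    proof -
      have e: "{xs\<in>Xs n q. set xs \<subseteq> S p} = {xs. set xs \<subseteq> S p \<and> length xs = q}"
        using BV_sub[of n "fst p" "snd p"] by (auto simp: Xs_def S_def)
      have "card {xs. set xs \<subseteq> S p \<and> length xs = q} = card (S p) ^ q"
        by (rule card_lists_length_eq) (simp add: S_def Pset_BV(1)[OF p])
      moreover have "card (S p) = 2 ^ (n - 1)" by (simp add: S_def Pset_BV(3)[OF p])
      ultimately show ?thesis
        by (simp only: sum_if_const[OF finite_Xs] e) (simp add: K_def)
    qed
    then show ?thesis by simp
  qed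
  also have "\<dots> = B * real (card (Pset n))" using Kpos by simp
  finally show ?thesis unfolding B_def .
qed

theorem mainTheorem2:
  fixes n q :: nat and A :: "bool list list \<Rightarrow> bool list pmf"
  assumes "n \<ge> 1" and "1 \<le> q" and "q \<le> n"
    and "\<And>xs. set_pmf (A xs) \<subseteq> cube n"
  shows "success n q A \<le> 1/2 + 1 / (2 * (2 ^ (n - q + 1) - 1))
     \<and> (\<exists>u \<in> cube n - {replicate n False}. \<exists>b.
          success_on n q A u b \<le> 1/2 + 1 / (2 * (2 ^ (n - q + 1) - 1)))"
proof -
  define B :: real where "B = 1/2 + 1 / (2 * (2 ^ (n - q + 1) - 1))"
  have sb: "(\<Sum>p\<in>Pset n. FF n q A p) \<le> B * real (card (Pset n))"
    unfolding B_def by (rule FF_sum_bound[OF assms(2,3,4)])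
  have cpos: "real (card (Pset n)) > 0"
    using finite_Pset Pset_ne[OF assms(1)] by (simp add: card_gt_0_iff)
  have c1: "success n q A \<le> B"
    unfolding success_FF[OF assms(1)] using sb cpos by (simp add: divide_le_eq)
  have c2: "\<exists>p\<in>Pset n. FF n q A p \<le> B"
  proof (rule ccontr)
    assume "\<not> (\<exists>p\<in>Pset n. FF n q A p \<le> B)"
    then have "\<forall>p\<in>Pset n. B < FF n q A p" by auto
    then have "(\<Sum>p\<in>Pset n. B) < (\<Sum>p\<in>Pset n. FF n q A p)"
      by (intro sum_strict_mono[OF finite_Pset Pset_ne[OF assms(1)]]) auto
    moreover have "(\<Sum>p\<in>Pset n. B) = B * real (card (Pset n))" by simp
    ultimately show False using sb by linarith
  qed
  then obtain p where p: "p \<in> Pset n" "FF n q A p \<le> B" by blast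
  have "fst p \<in> cube n - {replicate n False}" using p(1) by (auto simp: Pset_def)
  moreover have "success_on n q A (fst p) (snd p) \<le> B" using success_on_FF[OF p(1)] p(2) by simp
  ultimately have "\<exists>u \<in> cube n - {replicate n False}. \<exists>b. success_on n q A u b \<le> B" by blast
  then show ?thesis using c1 unfolding B_def by blast
qed

end
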